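(* In a single-item environment with a single real bidder whose value is drawn from the exponential distribution with mean $1$, for any $\epsilon>0$ the Deferred-Revelation Auction (DRA) over a public ledger, as described in the context, is not credible for the collateral $f=1-\epsilon$.
   Context: The bidder is quasi-linear; the exponential distribution with mean $1$ has CDF $1-e^{-t}$, virtual value $\varphi(v)=v-1$, monopoly reserve $1$. DRA over a public ledger (visible to all) with a perfectly hiding, perfectly binding, non-malleable commitment scheme: (1) every participant (the real bidder and any fake bids fabricated by the auctioneer) commits to an identifier and a bid and deposits collateral $f$; the auctioneer declares a matroid feasibility constraint $\hat{\mathcal{F}}$ and distributions $\hat D_j$ (virtual values $\hat\varphi_j$) for all committed bids; (2) each committed bid is revealed or concealed, and collateral of concealed bids is burnt; (3) among revealed bids, the set $S\in\hat{\mathcal{F}}$ maximizing $\sum_{i\in S}\hat\varphi_i(b_i)$ (lexicographic tie-breaking) is allocated, each allocated bidder paying its critical bid. The auctioneer may fabricate bids, misreport distributions and constraint (keeping the allocated real bidders feasible in the true constraint), and choose which fake bids to conceal after seeing revealed real bids. Its revenue is the real bidder's payment minus burnt collateral of its concealed fake bids. The DRA is credible for collateral $f$ if, when the real bidder bids truthfully, the auctioneer maximizes expected revenue by fabricating no bids and reporting the true distribution and constraint. *)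

theory Defs
  imports "HOL-Probability.Probability"
begin

text \<open>Single item, one real bidder (identifier 0) with value drawn from Exp(1),
  and fake bids (identifiers 1..k) fabricated by the auctioneer.\<close>

definition true_measure :: "real measure" where
  "true_measure = density lborel (\<lambda>x. ennreal (exponential_density 1 x))"

definition declared_dist :: "real measure \<Rightarrow> (real \<Rightarrow> real) \<Rightarrow> bool" where
  "declared_dist D g \<longleftrightarrow> g \<in> borel_measurable borel \<and> (\<forall>x. 0 \<le> g x)
     \<and> D = density lborel (\<lambda>x. ennreal (g x)) \<and> prob_space D"

definition vval :: "real measure \<Rightarrow> (real \<Rightarrow> real) \<Rightarrow> real \<Rightarrow> real" where
  "vval D g v = v - (1 - cdf D v) / g v"

definition matroid :: "nat set \<Rightarrow> nat set set \<Rightarrow> bool" where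
  "matroid E I \<longleftrightarrow> finite E \<and> (\<forall>S\<in>I. S \<subseteq> E) \<and> {} \<in> I
     \<and> (\<forall>S T. S \<in> I \<longrightarrow> T \<subseteq> S \<longrightarrow> T \<in> I)
     \<and> (\<forall>S T. S \<in> I \<longrightarrow> T \<in> I \<longrightarrow> card S < card T \<longrightarrow> (\<exists>x\<in>T - S. insert x S \<in> I))"

record strat =
  nfake :: nat
  fbid :: "nat \<Rightarrow> real"
  ddist :: "nat \<Rightarrow> real measure"      \<comment> \<open>declared distributions (index 0 = real bidder)\<close>
  ddens :: "nat \<Rightarrow> real \<Rightarrow> real"
  feas :: "nat set set"
  conceal :: "real \<Rightarrow> nat set"       \<comment> \<open>fake bids concealed, as a function of the revealed real bid\<close>

definition valid_strat :: "strat \<Rightarrow> bool" where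
  "valid_strat s \<longleftrightarrow> (\<forall>i\<le>nfake s. declared_dist (ddist s i) (ddens s i))
     \<and> matroid {0..nfake s} (feas s)
     \<and> (\<forall>v. conceal s v \<subseteq> {1..nfake s})"

definition bidvec :: "strat \<Rightarrow> real \<Rightarrow> nat \<Rightarrow> real" where
  "bidvec s z i = (if i = 0 then z else fbid s i)"

definition phihat :: "strat \<Rightarrow> real \<Rightarrow> nat \<Rightarrow> real" where
  "phihat s z i = vval (ddist s i) (ddens s i) (bidvec s z i)"

definition optimal_set :: "strat \<Rightarrow> real \<Rightarrow> nat set \<Rightarrow> nat set \<Rightarrow> bool" where
  "optimal_set s z R S \<longleftrightarrow> S \<in> feas s \<and> S \<subseteq> R
     \<and> (\<forall>T\<in>feas s. T \<subseteq> R \<longrightarrow> (\<Sum>i\<in>T. phihat s z i) \<le> (\<Sum>i\<in>S. phihat s z i))"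

definition lex_pref :: "nat set \<Rightarrow> nat set \<Rightarrow> bool" where
  "lex_pref S T \<longleftrightarrow> S \<noteq> T \<and> Min ((S - T) \<union> (T - S)) \<in> S"

definition winners :: "strat \<Rightarrow> real \<Rightarrow> nat set \<Rightarrow> nat set" where
  "winners s z R = (THE S. optimal_set s z R S
       \<and> (\<forall>T. optimal_set s z R T \<longrightarrow> T \<noteq> S \<longrightarrow> lex_pref S T))"

definition payment :: "strat \<Rightarrow> real \<Rightarrow> nat set \<Rightarrow> real" where
  "payment s v R = (if 0 \<in> winners s v R then Inf {z. 0 \<le> z \<and> 0 \<in> winners s z R} else 0)"

definition revealed :: "strat \<Rightarrow> real \<Rightarrow> nat set" where
  "revealed s v = {0..nfake s} - conceal s v"

text \<open>Auctioneer revenue for real value v (bid truthfully) and collateral f.\<close>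
definition revenue :: "real \<Rightarrow> strat \<Rightarrow> real \<Rightarrow> real" where
  "revenue f s v = payment s v (revealed s v) - f * real (card (conceal s v))"

definition exp_revenue :: "real \<Rightarrow> strat \<Rightarrow> real" where
  "exp_revenue f s = (\<integral>v. revenue f s v \<partial>true_measure)"

definition honest :: strat where
  "honest = \<lparr> nfake = 0, fbid = (\<lambda>_. 0), ddist = (\<lambda>_. true_measure),
     ddens = (\<lambda>_. exponential_density 1), feas = {{}, {0}}, conceal = (\<lambda>_. {}) \<rparr>"

definition credible :: "real \<Rightarrow> bool" where
  "credible f \<longleftrightarrow> (\<forall>s. valid_strat s \<longrightarrow> exp_revenue f s \<le> exp_revenue f honest)"

end

theory Submission
  imports Defs
begin


lemma ps_true: "prob_space true_measure"
  unfolding true_measure_def by (rule prob_space_exponential_density) simp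

lemma sets_true[simp]: "sets true_measure = sets borel"
  unfolding true_measure_def by simp

lemma space_true[simp]: "space true_measure = UNIV"
  unfolding true_measure_def by simp

lemma meas_le: "measure true_measure {..a} = (if 0 \<le> a then 1 - exp (- a) else 0)"
proof -
  have "emeasure true_measure {..a} = erlang_CDF 0 1 a"
    unfolding true_measure_def by (rule emeasure_erlang_density) simp
  then show ?thesis by (simp add: measure_def erlang_CDF_0)
qed

lemma meas_lt: "measure true_measure {..<a} = measure true_measure {..a}"
proof -
  have "emeasure true_measure {..<a} = emeasure true_measure {..a}"
    unfolding true_measure_def
    by (simp add: emeasure_density, intro nn_integral_cong_AE eventually_mono[OF AE_lborel_singleton[of a]])
       (auto split: split_indicator)
  then show ?thesis by (simp add: measure_def)
qed

lemma meas_ge: assumes "0 \<le> a" shows "measure true_measure {a..} = exp (- a)"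
proof -
  interpret prob_space true_measure by (rule ps_true)
  have "{a..} = space true_measure - {..<a}" by auto
  then have "measure true_measure {a..} = 1 - measure true_measure {..<a}"
    using prob_compl[of "{..<a}"] by simp
  then show ?thesis using assms by (simp add: meas_lt meas_le)
qed

lemma vval_true: "vval true_measure (exponential_density 1) z = (if z < 0 then z else z - 1)"
  by (simp add: vval_def cdf_def meas_le exponential_density_def)



lemma winners_eq:
  assumes fin: "\<forall>S\<in>feas s. finite S" and opt: "optimal_set s z R S"
    and pref: "\<forall>T. optimal_set s z R T \<longrightarrow> T \<noteq> S \<longrightarrow> lex_pref S T"
  shows "winners s z R = S"
  unfolding winners_def
proof (rule the_equality)
  show "optimal_set s z R S \<and> (\<forall>T. optimal_set s z R T \<longrightarrow> T \<noteq> S \<longrightarrow> lex_pref S T)"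
    using opt pref by blast
next
  fix S' assume H: "optimal_set s z R S' \<and> (\<forall>T. optimal_set s z R T \<longrightarrow> T \<noteq> S' \<longrightarrow> lex_pref S' T)"
  show "S' = S"
  proof (rule ccontr)
    assume ne: "S' \<noteq> S"
    have a: "lex_pref S S'" using pref H ne by blast
    have b: "lex_pref S' S" using H opt ne by blast
    have fS: "finite S" "finite S'" using fin opt H by (auto simp: optimal_set_def)
    define D where "D = (S - S') \<union> (S' - S)"
    have "finite D" "D \<noteq> {}" using fS ne unfolding D_def by auto
    then have "Min D \<in> D" by simp
    moreover have "Min D \<in> S" "Min D \<in> S'" using a b
      unfolding lex_pref_def D_def by (auto simp: Un_commute)
    ultimately show False unfolding D_def by auto
  qed
qed

lemma payment_thr:
  assumes "\<And>z. 0 \<in> winners s z R \<longleftrightarrow> c \<le> z" "0 \<le> c"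
  shows "payment s v R = (if c \<le> v then c else 0)"
proof -
  have "{z. 0 \<le> z \<and> 0 \<in> winners s z R} = {c..}" using assms by auto
  then show ?thesis unfolding payment_def using assms by simp
qed


lemma ph_honest[simp]: "phihat honest z 0 = (if z < 0 then z else z - 1)"
  by (simp add: honest_def phihat_def bidvec_def vval_true)
lemma feas_honest[simp]: "feas honest = {{},{0}}" by (simp add: honest_def)
lemma lex0[simp]: "lex_pref {0} {}" "lex_pref {0} {1::nat}" "lex_pref {0} {Suc 0}" "lex_pref {Suc 0} {}"
  by (auto simp: lex_pref_def)
lemma "optimal_set honest z {0} T \<Longrightarrow> T \<in> feas honest"
  unfolding optimal_set_def by blast
lemma "T \<in> feas honest \<Longrightarrow> T \<noteq> {0} \<Longrightarrow> T = {}"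
  by simp
lemma "optimal_set honest z {0} {0} \<Longrightarrow> phihat honest z 0 \<ge> 0"
  unfolding optimal_set_def by force
lemma opt_feas: "optimal_set s z R T \<Longrightarrow> T \<in> feas s"
  unfolding optimal_set_def by blast

lemma win_honest: "0 \<in> winners honest z {0} \<longleftrightarrow> 1 \<le> z"
proof (cases "1 \<le> z")
  case True
  have "winners honest z {0} = {0}"
  proof (rule winners_eq)
    show "\<forall>S\<in>feas honest. finite S" by simp
    show "optimal_set honest z {0} {0}" using True by (simp add: optimal_set_def)
    show "\<forall>T. optimal_set honest z {0} T \<longrightarrow> T \<noteq> {0} \<longrightarrow> lex_pref {0} T"
    proof (intro allI impI)
      fix T assume "optimal_set honest z {0} T" "T \<noteq> {0}"
      then have "T = {}" using opt_feas[of honest z "{0}" T] by simp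
      then show "lex_pref {0} T" by simp
    qed
  qed
  then show ?thesis using True by simp
next
  case False
  have "winners honest z {0} = {}"
  proof (rule winners_eq)
    show "\<forall>S\<in>feas honest. finite S" by simp
    show "optimal_set honest z {0} {}" using False by (simp add: optimal_set_def)
    show "\<forall>T. optimal_set honest z {0} T \<longrightarrow> T \<noteq> {} \<longrightarrow> lex_pref {} T"
    proof (intro allI impI)
      fix T assume o: "optimal_set honest z {0} T" and "T \<noteq> {}"
      then have "T = {0}" using opt_feas[of honest z "{0}" T] by simp
      then have "phihat honest z 0 \<ge> 0" using o unfolding optimal_set_def by force
      then show "lex_pref {} T" using False by (simp split: if_splits)
    qed
  qed
  then show ?thesis using False by simp
qed

definition dev :: "real \<Rightarrow> strat" where
  "dev t = \<lparr> nfake = 1, fbid = (\<lambda>_. t), ddist = (\<lambda>_. true_measure),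
     ddens = (\<lambda>_. exponential_density 1), feas = {{}, {0}, {1}},
     conceal = (\<lambda>v. if 1 \<le> v \<and> v < t then {1} else {}) \<rparr>"

lemma ph_dev0[simp]: "phihat (dev t) z 0 = (if z < 0 then z else z - 1)"
  by (simp add: dev_def phihat_def bidvec_def vval_true)
lemma ph_dev1[simp]: "1 < t \<Longrightarrow> phihat (dev t) z 1 = t - 1"
  by (simp add: dev_def phihat_def bidvec_def vval_true)
lemma ph_dev1'[simp]: "1 < t \<Longrightarrow> phihat (dev t) z (Suc 0) = t - 1"
  using ph_dev1 by simp
lemma feas_dev[simp]: "feas (dev t) = {{},{0},{1}}" by (simp add: dev_def)
lemma nfake_dev[simp]: "nfake (dev t) = 1" by (simp add: dev_def)
lemma conceal_dev[simp]: "conceal (dev t) v = (if 1 \<le> v \<and> v < t then {1} else {})" by (simp add: dev_def)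

lemma win_dev0: "0 \<in> winners (dev t) z {0} \<longleftrightarrow> 1 \<le> z"
proof (cases "1 \<le> z")
  case True
  have "winners (dev t) z {0} = {0}"
  proof (rule winners_eq)
    show "\<forall>S\<in>feas (dev t). finite S" by simp
    show "optimal_set (dev t) z {0} {0}" using True by (simp add: optimal_set_def)
    show "\<forall>T. optimal_set (dev t) z {0} T \<longrightarrow> T \<noteq> {0} \<longrightarrow> lex_pref {0} T"
    proof (intro allI impI)
      fix T assume o: "optimal_set (dev t) z {0} T" "T \<noteq> {0}"
      then have "T \<subseteq> {0}" unfolding optimal_set_def by blast
      then have "T = {}" using o opt_feas[of "dev t" z "{0}" T] by auto
      then show "lex_pref {0} T" by simp
    qed
  qed
  then show ?thesis using True by simp
next
  case False
  have "winners (dev t) z {0} = {}"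
  proof (rule winners_eq)
    show "\<forall>S\<in>feas (dev t). finite S" by simp
    show "optimal_set (dev t) z {0} {}" using False by (simp add: optimal_set_def)
    show "\<forall>T. optimal_set (dev t) z {0} T \<longrightarrow> T \<noteq> {} \<longrightarrow> lex_pref {} T"
    proof (intro allI impI)
      fix T assume o: "optimal_set (dev t) z {0} T" and "T \<noteq> {}"
      then have "T \<subseteq> {0}" unfolding optimal_set_def by blast
      then have "T = {0}" using o opt_feas[of "dev t" z "{0}" T] \<open>T \<noteq> {}\<close> by auto
      then have "phihat (dev t) z 0 \<ge> 0" using o unfolding optimal_set_def by force
      then show "lex_pref {} T" using False by (simp split: if_splits)
    qed
  qed
  then show ?thesis using False by simp
qed

lemma win_dev01: assumes t: "1 < t" shows "0 \<in> winners (dev t) z {0,1} \<longleftrightarrow> t \<le> z"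
proof (cases "t \<le> z")
  case True
  have "winners (dev t) z {0,1} = {0}"
  proof (rule winners_eq)
    show "\<forall>S\<in>feas (dev t). finite S" by simp
    show "optimal_set (dev t) z {0,1} {0}" using True t by (simp add: optimal_set_def)
    show "\<forall>T. optimal_set (dev t) z {0,1} T \<longrightarrow> T \<noteq> {0} \<longrightarrow> lex_pref {0} T"
    proof (intro allI impI)
      fix T assume o: "optimal_set (dev t) z {0,1} T" "T \<noteq> {0}"
      then have "T = {} \<or> T = {1}" using opt_feas[of "dev t" z "{0,1}" T] by auto
      then show "lex_pref {0} T" by auto
    qed
  qed
  then show ?thesis using True by simp
next
  case False
  have "winners (dev t) z {0,1} = {1}"
  proof (rule winners_eq)
    show "\<forall>S\<in>feas (dev t). finite S" by simp
    show "optimal_set (dev t) z {0,1} {1}" using False t by (simp add: optimal_set_def)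
    show "\<forall>T. optimal_set (dev t) z {0,1} T \<longrightarrow> T \<noteq> {1} \<longrightarrow> lex_pref {1} T"
    proof (intro allI impI)
      fix T assume o: "optimal_set (dev t) z {0,1} T" and "T \<noteq> {1}"
      then have "T = {} \<or> T = {0}" using opt_feas[of "dev t" z "{0,1}" T] by auto
      moreover have "\<not> optimal_set (dev t) z {0,1} {}" using t unfolding optimal_set_def by force
      moreover have "\<not> optimal_set (dev t) z {0,1} {0}"
      proof
        assume "optimal_set (dev t) z {0,1} {0}"
        then have "sum (phihat (dev t) z) {1} \<le> sum (phihat (dev t) z) {0}"
          unfolding optimal_set_def by simp
        then show False using t False by (simp split: if_splits)
      qed
      ultimately show "lex_pref {1} T" using o by auto
    qed
  qed
  then show ?thesis using False by simp
qed



lemma int_ind: "integrable true_measure (indicator {a..} :: real \<Rightarrow> real)"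
proof -
  interpret prob_space true_measure by (rule ps_true)
  show ?thesis by (intro integrable_real_indicator) (auto simp: less_top[symmetric])
qed

lemma rev_honest: "revenue f honest v = indicator {1..} v"
proof -
  have r: "revealed honest v = {0}" by (simp add: revealed_def honest_def)
  have c: "conceal honest v = {}" by (simp add: honest_def)
  have "payment honest v {0} = (if 1 \<le> v then 1 else 0)"
    by (rule payment_thr) (auto simp: win_honest)
  then show ?thesis by (simp add: revenue_def r c)
qed

lemma exp_honest: "exp_revenue f honest = exp (-1)"
  unfolding exp_revenue_def rev_honest using meas_ge[of 1] by simp

lemma nat01: "{0..1::nat} = {0,1}" by auto

lemma rev_dev: assumes t: "1 < t"
  shows "revenue f (dev t) v = t * indicator {t..} v + (1 - f) * (indicator {1..} v - indicator {t..} v)"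
proof -
  have p0: "payment (dev t) v {0} = (if 1 \<le> v then 1 else 0)"
    by (rule payment_thr) (auto simp: win_dev0)
  have p1: "payment (dev t) v {0,1} = (if t \<le> v then t else 0)"
    by (rule payment_thr[OF win_dev01[OF t]]) (use t in simp)
  show ?thesis
  proof (cases "1 \<le> v \<and> v < t")
    case True
    then have "revealed (dev t) v = {0}" by (auto simp: revealed_def nat01)
    moreover have "conceal (dev t) v = {1}" using True by simp
    moreover have "indicator {t..} v = (0::real)" "indicator {1..} v = (1::real)" using True by auto
    ultimately show ?thesis using True p0 unfolding revenue_def by simp
  next
    case False
    then have "revealed (dev t) v = {0,1}" by (auto simp: revealed_def nat01)
    moreover have "conceal (dev t) v = {}" using False by simp
    moreover have "indicator {t..} v = (if t \<le> v then 1 else 0::real)" "indicator {1..} v = (if t \<le> v then 1 else 0::real)"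
      using False t by auto
    ultimately show ?thesis using p1 unfolding revenue_def by simp
  qed
qed

lemma exp_dev: assumes t: "1 < t"
  shows "exp_revenue f (dev t) = t * exp (- t) + (1 - f) * (exp (-1) - exp (- t))"
proof -
  have "exp_revenue f (dev t) = (\<integral>v. t * indicator {t..} v + (1 - f) * (indicator {1..} v - indicator {t..} v) \<partial>true_measure)"
    unfolding exp_revenue_def rev_dev[OF t] ..
  also have "\<dots> = t * (\<integral>v. indicator {t..} v \<partial>true_measure) + (1 - f) * ((\<integral>v. indicator {1..} v \<partial>true_measure) - (\<integral>v. indicator {t..} v \<partial>true_measure))"
    by (simp add: int_ind)
  also have "\<dots> = t * exp (- t) + (1 - f) * (exp (-1) - exp (- t))"
    using meas_ge[of 1] meas_ge[of t] t by simp
  finally show ?thesis .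
qed

lemma valid_dev: "valid_strat (dev t)"
proof -
  have d: "declared_dist true_measure (exponential_density 1)"
    unfolding declared_dist_def using ps_true
    by (auto simp: true_measure_def exponential_density_def)
  have m: "matroid {0..1} {{},{0},{1}}"
    unfolding matroid_def
  proof (intro conjI allI impI)
    fix S T :: "nat set" assume "S \<in> {{},{0},{1}}" "T \<subseteq> S"
    then show "T \<in> {{},{0},{1}}" by (auto simp: subset_singleton_iff)
  next
    fix S T :: "nat set" assume S: "S \<in> {{},{0},{1}}" and T: "T \<in> {{},{0},{1}}" and c: "card S < card T"
    then have "S = {}" by auto
    moreover obtain x where "T = {x}" using T c S by auto
    ultimately show "\<exists>x\<in>T - S. insert x S \<in> {{},{0},{1}}" using T by auto
  qed auto
  show ?thesis unfolding valid_strat_def using d m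
    by (auto simp: dev_def)
qed


lemma key_ineq:
  fixes u e a :: real
  assumes u: "0 < u" "u < e" and a: "1 - u \<le> a" "a \<le> 1"
  shows "(1 + u) * a + e * (1 - a) > 1"
proof -
  define d where "d = 1 - a"
  have d: "0 \<le> d" "d \<le> u" using a by (auto simp: d_def)
  have eq: "(1 + u) * a + e * (1 - a) - 1 = u - d * (1 + u - e)"
    by (simp add: d_def algebra_simps)
  have "d * (1 + u - e) < u"
  proof (cases "1 + u - e \<le> 0")
    case True
    then have "d * (1 + u - e) \<le> 0" using d by (simp add: mult_nonneg_nonpos)
    then show ?thesis using u by linarith
  next
    case False
    then have "d * (1 + u - e) \<le> u * (1 + u - e)" using d by (intro mult_right_mono) auto
    also have "\<dots> < u" using u False by (simp add: algebra_simps)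
    finally show ?thesis .
  qed
  then show ?thesis using eq by linarith
qed

theorem mainTheorem7:
  fixes \<epsilon> :: real
  assumes "\<epsilon> > 0"
  shows "\<not> credible (1 - \<epsilon>)"
proof
  assume cr: "credible (1 - \<epsilon>)"
  define u where "u = min 1 \<epsilon> / 2"
  have u: "0 < u" "u < \<epsilon>" "u < 1" using assms by (auto simp: u_def)
  define t where "t = 1 + u"
  have t: "1 < t" using u by (simp add: t_def)
  define a where "a = exp (- u)"
  have a: "1 - u \<le> a" "a \<le> 1" using exp_ge_add_one_self[of "- u"] u by (auto simp: a_def)
  have et: "exp (- t) = exp (-1) * a" by (simp add: t_def a_def flip: exp_add)
  have "exp (-1) * 1 < exp (-1) * ((1 + u) * a + \<epsilon> * (1 - a))"
    using key_ineq[OF u(1,2) a] by (intro mult_strict_left_mono) auto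
  also have "\<dots> = exp_revenue (1 - \<epsilon>) (dev t)"
    unfolding exp_dev[OF t] et by (simp add: t_def algebra_simps)
  also have "\<dots> \<le> exp_revenue (1 - \<epsilon>) honest"
    using cr valid_dev unfolding credible_def by blast
  also have "\<dots> = exp (-1)" by (rule exp_honest)
  finally show False by simp
qed

end
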